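(* Let $D_2>0$, $k_3>0$, $S_2^{in}>0$, and let $\mu_2\in C^1(\mathbb R_+)$ satisfy $\mu_2(0)=0$, $\lim_{s\to\infty}\mu_2(s)=0$, and there exists $S_2^m>0$ with $\mu_2'>0$ on $(0,S_2^m)$ and $\mu_2'<0$ on $(S_2^m,\infty)$. Let $X_2^{1*}$ be a positive constant with $X_2^{1*}<S_2^{in}/k_3$. Define $f_2(x)=\mu_2(S_2^{in}-k_3x)$ on $[0,S_2^{in}/k_3]$, $g_2(x)=D_2(x-X_2^{1*})/x$ for $x>0$, and $x_1^m=(S_2^{in}-S_2^m)/k_3$. Then: \begin{enumerate} \item if $X_2^{1*}\ge x_1^m$, the equation $f_2(x)=g_2(x)$ has a unique solution in $(X_2^{1*},S_2^{in}/k_3)$; \item if $X_2^{1*}<x_1^m$, the equation $f_2(x)=g_2(x)$ has at least one solution in $(X_2^{1*},S_2^{in}/k_3)$; generically, there is an odd number of solutions in this interval. \end{enumerate} *)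

theory Defs
  imports "HOL-Analysis.Analysis"
begin

definition f2 :: "(real \<Rightarrow> real) \<Rightarrow> real \<Rightarrow> real \<Rightarrow> real \<Rightarrow> real" where
  "f2 \<mu> Sin k x = \<mu> (Sin - k * x)"

definition g2 :: "real \<Rightarrow> real \<Rightarrow> real \<Rightarrow> real" where
  "g2 D Xs x = D * (x - Xs) / x"

end

theory Submission imports Defs begin

definition sgnchg :: "(real \<Rightarrow> real) \<Rightarrow> real \<Rightarrow> bool" where
"sgnchg h z \<longleftrightarrow> (\<exists>e>0. ((\<forall>y. z-e<y \<and> y<z \<longrightarrow> h y > 0) \<and> (\<forall>y. z<y \<and> y<z+e \<longrightarrow> h y < 0))
   \<or> ((\<forall>y. z-e<y \<and> y<z \<longrightarrow> h y < 0) \<and> (\<forall>y. z<y \<and> y<z+e \<longrightarrow> h y > 0)))"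

lemma nozero_same_sign:
  fixes h :: "real \<Rightarrow> real"
  assumes "continuous_on {a..b} h" "a \<le> b" "h a \<noteq> 0" "h b \<noteq> 0" "\<forall>x. a<x \<and> x<b \<longrightarrow> h x \<noteq> 0"
  shows "h a > 0 \<longleftrightarrow> h b > 0"
proof (rule ccontr)
  assume "\<not> ?thesis"
  then have "(h a > 0 \<and> h b < 0) \<or> (h a < 0 \<and> h b > 0)" using assms by linarith
  then obtain x where "a \<le> x" "x \<le> b" "h x = 0"
    using IVT'[of h a 0 b] IVT2'[of h b 0 a] assms by force
  then show False using assms by (cases "x = a"; cases "x = b") auto
qed

lemma parity_aux:
  fixes h :: "real \<Rightarrow> real"
  assumes cont: "continuous_on {a0..b} h" and hb: "h b \<noteq> 0"
    and sc: "\<And>z. a0<z \<Longrightarrow> z<b \<Longrightarrow> h z = 0 \<Longrightarrow> sgnchg h z"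
  shows "\<forall>a. a0 \<le> a \<longrightarrow> a < b \<longrightarrow> h a \<noteq> 0 \<longrightarrow> finite {x. a<x \<and> x<b \<and> h x = 0}
     \<longrightarrow> card {x. a<x \<and> x<b \<and> h x = 0} = n \<longrightarrow> (even n \<longleftrightarrow> (h a > 0 \<longleftrightarrow> h b > 0))"
proof (induction n)
  case 0
  show ?case
  proof (intro allI impI)
    fix a assume a: "a0 \<le> a" "a < b" "h a \<noteq> 0" "finite {x. a<x \<and> x<b \<and> h x = 0}"
      "card {x. a<x \<and> x<b \<and> h x = 0} = 0"
    then have "\<forall>x. a<x \<and> x<b \<longrightarrow> h x \<noteq> 0" by auto
    moreover have "continuous_on {a..b} h" using a(1) by (intro continuous_on_subset[OF cont]) auto
    ultimately show "even (0::nat) \<longleftrightarrow> (h a > 0 \<longleftrightarrow> h b > 0)"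
      using nozero_same_sign[of a b h] a hb by simp
  qed
next
  case (Suc n)
  show ?case
  proof (intro allI impI)
    fix a assume a: "a0 \<le> a" "a < b" "h a \<noteq> 0" "finite {x. a<x \<and> x<b \<and> h x = 0}"
      "card {x. a<x \<and> x<b \<and> h x = 0} = Suc n"
    define Z where "Z = {x. a<x \<and> x<b \<and> h x = 0}"
    have fin: "finite Z" using a Z_def by simp
    have Zne: "Z \<noteq> {}" using a(5) Z_def by (metis card.empty nat.distinct(1))
    define z where "z = Min Z"
    have zZ: "z \<in> Z" using Min_in fin Zne z_def by blast
    have zmin: "\<And>x. x \<in> Z \<Longrightarrow> z \<le> x" using Min_le fin z_def by blast
    define Z' where "Z' = Z - {z}"
    have cardZ': "card Z' = n" using a zZ fin unfolding Z'_def Z_def by simp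
    have finZ': "finite Z'" using fin Z'_def by simp
    define m where "m = (if Z' = {} then b else Min Z')"
    have mZ': "\<And>x. x \<in> Z' \<Longrightarrow> m \<le> x" using Min_le finZ' m_def by auto
    have zm: "z < m"
    proof (cases "Z' = {}")
      case True then show ?thesis using zZ Z_def m_def by auto
    next
      case False
      then have "Min Z' \<in> Z'" using Min_in finZ' by blast
      then show ?thesis using False m_def zmin Z'_def by force
    qed
    have mb: "m \<le> b"
    proof (cases "Z' = {}")
      case True then show ?thesis using m_def by auto
    next
      case False
      then have "Min Z' \<in> Z'" using Min_in finZ' by blast
      then show ?thesis using False m_def Z'_def Z_def by force
    qed
    have "sgnchg h z" using sc zZ a(1) Z_def by auto
    then obtain e where e: "e > 0" and pat: "((\<forall>y. z-e<y \<and> y<z \<longrightarrow> h y > 0) \<and> (\<forall>y. z<y \<and> y<z+e \<longrightarrow> h y < 0))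
       \<or> ((\<forall>y. z-e<y \<and> y<z \<longrightarrow> h y < 0) \<and> (\<forall>y. z<y \<and> y<z+e \<longrightarrow> h y > 0))"
      unfolding sgnchg_def by blast
    define a' where "a' = min (z + e/2) ((z+m)/2)"
    define y where "y = max (z - e/2) ((a+z)/2)"
    have az: "a < z" using zZ Z_def by auto
    have a'1: "z < a'" "a' < m" "a' < z + e" using zm e unfolding a'_def by (auto simp: min_def)
    have y1: "a < y" "y < z" "z - e < y" using az e unfolding y_def by (auto simp: max_def)
    have Zeq: "{x. a'<x \<and> x<b \<and> h x = 0} = Z'"
    proof
      show "{x. a'<x \<and> x<b \<and> h x = 0} \<subseteq> Z'"
        using a'1 az unfolding Z'_def Z_def by auto
      show "Z' \<subseteq> {x. a'<x \<and> x<b \<and> h x = 0}"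
        using mZ' a'1 unfolding Z'_def Z_def by force
    qed
    have ha': "h a' \<noteq> 0" and hy: "h y \<noteq> 0" and flip: "h a' > 0 \<longleftrightarrow> \<not> h y > 0"
      using pat a'1 y1 by auto
    have "\<forall>x. a<x \<and> x<y \<longrightarrow> h x \<noteq> 0"
    proof (intro allI impI)
      fix x assume "a<x \<and> x<y"
      then show "h x \<noteq> 0" using zmin[of x] y1 mb zm unfolding Z_def by force
    qed
    moreover have "continuous_on {a..y} h" using a(1) y1 zm mb by (intro continuous_on_subset[OF cont]) auto
    ultimately have s1: "h a > 0 \<longleftrightarrow> h y > 0"
      using nozero_same_sign[of a y h] a y1 hy by simp
    have "even n \<longleftrightarrow> (h a' > 0 \<longleftrightarrow> h b > 0)"
      using Suc.IH a a'1 az mb zm ha' Zeq finZ' cardZ' by auto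
    then show "even (Suc n) \<longleftrightarrow> (h a > 0 \<longleftrightarrow> h b > 0)"
      using s1 flip by auto
  qed
qed

lemma zeros_odd:
  fixes h :: "real \<Rightarrow> real"
  assumes cont: "continuous_on {a..b} h" and ab: "a < b" and ha: "h a > 0" and hb: "h b < 0"
    and sc: "\<And>z. a<z \<Longrightarrow> z<b \<Longrightarrow> h z = 0 \<Longrightarrow> sgnchg h z"
  shows "finite {x \<in> {a<..<b}. h x = 0} \<and> odd (card {x \<in> {a<..<b}. h x = 0})"
proof -
  have eq: "{x \<in> {a<..<b}. h x = 0} = {x. a<x \<and> x<b \<and> h x = 0}" by auto
  have fin: "finite {x. a<x \<and> x<b \<and> h x = 0}"
  proof (rule ccontr)
    assume inf: "infinite {x. a<x \<and> x<b \<and> h x = 0}"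
    obtain x where x: "x \<in> {a..b}" "x islimpt {x. a<x \<and> x<b \<and> h x = 0}"
      using Heine_Borel_imp_Bolzano_Weierstrass[OF compact_Icc inf, of a b] by force
    have cl: "closed {x \<in> {a..b}. h x = 0}"
      by (rule continuous_closed_preimage_constant[OF cont]) simp
    have "x islimpt {x \<in> {a..b}. h x = 0}"
      by (rule islimpt_subset[OF x(2)]) auto
    then have "x \<in> {x \<in> {a..b}. h x = 0}" using cl closed_limpt by blast
    then have xz: "h x = 0" "a < x" "x < b" using ha hb
      by (auto simp: order.order_iff_strict)
    then have "sgnchg h x" using sc by auto
    then obtain e where e: "e > 0" and pat: "((\<forall>y. x-e<y \<and> y<x \<longrightarrow> h y > 0) \<and> (\<forall>y. x<y \<and> y<x+e \<longrightarrow> h y < 0))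
       \<or> ((\<forall>y. x-e<y \<and> y<x \<longrightarrow> h y < 0) \<and> (\<forall>y. x<y \<and> y<x+e \<longrightarrow> h y > 0))"
      unfolding sgnchg_def by blast
    obtain x' where x': "x' \<in> {x. a<x \<and> x<b \<and> h x = 0}" "x' \<noteq> x" "dist x' x < e"
      using x(2) e unfolding islimpt_approachable by blast
    have "x - e < x'" "x' < x + e" using x'(3) by (auto simp: dist_real_def)
    then show False using pat x' by (cases "x' < x") (auto simp: not_less order.order_iff_strict)
  qed
  have "\<forall>a'. a \<le> a' \<longrightarrow> a' < b \<longrightarrow> h a' \<noteq> 0 \<longrightarrow> finite {x. a'<x \<and> x<b \<and> h x = 0}
     \<longrightarrow> card {x. a'<x \<and> x<b \<and> h x = 0} = card {x. a<x \<and> x<b \<and> h x = 0} \<longrightarrow>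
     (even (card {x. a<x \<and> x<b \<and> h x = 0}) \<longleftrightarrow> (h a' > 0 \<longleftrightarrow> h b > 0))"
    by (rule parity_aux[OF cont]) (use hb sc in auto)
  then have "even (card {x. a<x \<and> x<b \<and> h x = 0}) \<longleftrightarrow> (h a > 0 \<longleftrightarrow> h b > 0)"
    using ab ha fin by auto
  then show ?thesis using eq fin ha hb by auto
qed


lemma deriv_sgnchg:
  fixes h :: "real \<Rightarrow> real"
  assumes "DERIV h z :> d" "d \<noteq> 0" "h z = 0"
  shows "sgnchg h z"
proof (cases "d > 0")
  case True
  obtain d1 where d1: "d1 > 0" "\<forall>t>0. t < d1 \<longrightarrow> h z < h (z + t)"
    using DERIV_pos_inc_right[OF assms(1) True] by blast
  obtain d2 where d2: "d2 > 0" "\<forall>t>0. t < d2 \<longrightarrow> h (z - t) < h z"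
    using DERIV_pos_inc_left[OF assms(1) True] by blast
  have "(\<forall>y. z - min d1 d2<y \<and> y<z \<longrightarrow> h y < 0) \<and> (\<forall>y. z<y \<and> y<z + min d1 d2 \<longrightarrow> h y > 0)"
  proof safe
    fix y assume "z - min d1 d2 < y" "y < z"
    then show "h y < 0" using d2(2)[rule_format, of "z - y"] assms(3) by auto
  next
    fix y assume "z < y" "y < z + min d1 d2"
    then show "h y > 0" using d1(2)[rule_format, of "y - z"] assms(3) by auto
  qed
  then show ?thesis unfolding sgnchg_def using d1 d2
    by (intro exI[of _ "min d1 d2"]) auto
next
  case False
  then have neg: "d < 0" using assms(2) by auto
  obtain d1 where d1: "d1 > 0" "\<forall>t>0. t < d1 \<longrightarrow> h z > h (z + t)"
    using DERIV_neg_dec_right[OF assms(1) neg] by blast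
  obtain d2 where d2: "d2 > 0" "\<forall>t>0. t < d2 \<longrightarrow> h z < h (z - t)"
    using DERIV_neg_dec_left[OF assms(1) neg] by blast
  have "(\<forall>y. z - min d1 d2<y \<and> y<z \<longrightarrow> h y > 0) \<and> (\<forall>y. z<y \<and> y<z + min d1 d2 \<longrightarrow> h y < 0)"
  proof safe
    fix y assume "z - min d1 d2 < y" "y < z"
    then show "h y > 0" using d2(2)[rule_format, of "z - y"] assms(3) by auto
  next
    fix y assume "z < y" "y < z + min d1 d2"
    then show "h y < 0" using d1(2)[rule_format, of "y - z"] assms(3) by auto
  qed
  then show ?thesis unfolding sgnchg_def using d1 d2
    by (intro exI[of _ "min d1 d2"]) auto
qed

theorem lemmaA2:
  fixes D2 k3 Sin S2m Xs :: real
    and \<mu>2 \<mu>2' :: "real \<Rightarrow> real"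
  assumes D2: "D2 > 0" and k3: "k3 > 0" and Sin: "Sin > 0"
    and deriv: "\<And>s. s \<ge> 0 \<Longrightarrow> (\<mu>2 has_real_derivative \<mu>2' s) (at s within {0..})"
    and cont: "continuous_on {0..} \<mu>2'"
    and mu0: "\<mu>2 0 = 0"
    and lim: "(\<mu>2 \<longlongrightarrow> 0) at_top"
    and S2m: "S2m > 0"
    and incr: "\<And>s. 0 < s \<Longrightarrow> s < S2m \<Longrightarrow> \<mu>2' s > 0"
    and decr: "\<And>s. S2m < s \<Longrightarrow> \<mu>2' s < 0"
    and Xs: "Xs > 0" "Xs < Sin / k3"
  shows "(Xs \<ge> (Sin - S2m) / k3 \<longrightarrow>
            (\<exists>!x. x \<in> {Xs<..<Sin / k3} \<and> f2 \<mu>2 Sin k3 x = g2 D2 Xs x))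
       \<and> (Xs < (Sin - S2m) / k3 \<longrightarrow>
            (\<exists>x \<in> {Xs<..<Sin / k3}. f2 \<mu>2 Sin k3 x = g2 D2 Xs x)
          \<and> ((\<forall>x \<in> {Xs<..<Sin / k3}. f2 \<mu>2 Sin k3 x = g2 D2 Xs x \<longrightarrow>
                 \<not> ((\<lambda>y. f2 \<mu>2 Sin k3 y - g2 D2 Xs y) has_real_derivative 0) (at x))
             \<longrightarrow> finite {x \<in> {Xs<..<Sin / k3}. f2 \<mu>2 Sin k3 x = g2 D2 Xs x}
               \<and> odd (card {x \<in> {Xs<..<Sin / k3}. f2 \<mu>2 Sin k3 x = g2 D2 Xs x})))"
proof -
  define B where "B = Sin / k3"
  define h where "h = (\<lambda>y. f2 \<mu>2 Sin k3 y - g2 D2 Xs y)"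
  have dat: "DERIV \<mu>2 s :> \<mu>2' s" if "s > 0" for s
  proof -
    have "at s within {0..} = at s"
      by (rule at_within_interior) (use that in simp)
    then show ?thesis using deriv[of s] that by simp
  qed
  have contmu: "continuous_on {0..} \<mu>2"
    unfolding continuous_on_eq_continuous_within
    using deriv DERIV_continuous by fastforce
  have mvt: "\<exists>z. a<z \<and> z<b \<and> \<mu>2 b - \<mu>2 a = (b-a) * \<mu>2' z" if "0 \<le> a" "a < b" for a b
  proof -
    have c: "continuous_on {a..b} \<mu>2" using that by (intro continuous_on_subset[OF contmu]) auto
    have "\<mu>2 differentiable (at x)" if "a < x" for x
      using dat[of x] that \<open>0 \<le> a\<close> real_differentiable_def by fastforce
    then obtain l z where "a<z" "z<b" "DERIV \<mu>2 z :> l" "\<mu>2 b - \<mu>2 a = (b-a)*l"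
      using MVT[OF \<open>a<b\<close> c] by blast
    moreover have "l = \<mu>2' z" using DERIV_unique[OF \<open>DERIV \<mu>2 z :> l\<close> dat[of z]] \<open>a<z\<close> that by simp
    ultimately show ?thesis by blast
  qed
  have inc: "\<mu>2 a < \<mu>2 b" if ab: "0 \<le> a" "a < b" "b \<le> S2m" for a b
  proof -
    obtain z where "a<z" "z<b" "\<mu>2 b - \<mu>2 a = (b-a) * \<mu>2' z" using mvt[of a b] ab by auto
    moreover have "\<mu>2' z > 0" using incr[of z] calculation that by auto
    ultimately show ?thesis using that by (smt (verit) mult_pos_pos)
  qed
  have dec: "\<mu>2 b < \<mu>2 a" if ab: "S2m \<le> a" "a < b" for a b
  proof -
    obtain z where "a<z" "z<b" "\<mu>2 b - \<mu>2 a = (b-a) * \<mu>2' z" using mvt[of a b] ab S2m by auto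
    moreover have "\<mu>2' z < 0" using decr[of z] calculation that by auto
    ultimately show ?thesis using that by (smt (verit) mult_pos_neg)
  qed
  have pos: "\<mu>2 s > 0" if "s > 0" for s
  proof (cases "s \<le> S2m")
    case True then show ?thesis using inc[of 0 s] mu0 that by simp
  next
    case False
    have "eventually (\<lambda>t. \<mu>2 t \<le> \<mu>2 (s+1)) at_top"
      unfolding eventually_at_top_linorder
      using dec[of "s+1"] False by (intro exI[of _ "s+1"]) (force simp: order.order_iff_strict)
    then have "0 \<le> \<mu>2 (s+1)" using tendsto_upperbound[OF lim] by simp
    then show ?thesis using dec[of s "s+1"] False by simp
  qed
  have kB: "k3 * B = Sin" using k3 B_def by simp
  have XsB: "Xs < B" using Xs B_def by simp
  have hcont: "continuous_on {Xs..B} h"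
  proof -
    have "continuous_on {Xs..B} (\<lambda>x. \<mu>2 (Sin - k3*x))"
    proof (rule continuous_on_compose2[OF contmu])
      show "continuous_on {Xs..B} (\<lambda>x. Sin - k3 * x)" by (intro continuous_intros)
      show "(\<lambda>x. Sin - k3 * x) ` {Xs..B} \<subseteq> {0..}"
        using kB k3 by (auto simp: mult_left_mono)
    qed
    moreover have "continuous_on {Xs..B} (\<lambda>x. D2 * (x - Xs) / x)"
      using Xs by (intro continuous_intros) auto
    ultimately show ?thesis unfolding h_def f2_def g2_def by (rule continuous_on_diff)
  qed
  have hXs: "h Xs > 0" unfolding h_def f2_def g2_def
    using pos[of "Sin - k3 * Xs"] Xs k3 by (simp add: pos_less_divide_eq mult.commute)
  have hB: "h B < 0" unfolding h_def f2_def g2_def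
    using kB mu0 D2 XsB Xs by (simp add: divide_pos_pos)
  have hder: "\<exists>d. DERIV h x :> d" if "Xs < x" "x < B" for x
  proof -
    have sx: "Sin - k3 * x > 0" using that kB k3 by (metis diff_gt_0_iff_gt mult_strict_left_mono)
    have "((\<lambda>x. \<mu>2 (Sin - k3*x)) has_real_derivative \<mu>2' (Sin - k3*x) * (-k3)) (at x)"
      by (rule DERIV_chain2[where g="\<lambda>x. Sin - k3*x", OF dat[OF sx]]) (auto intro!: derivative_eq_intros)
    moreover have "((\<lambda>x. D2 * (x - Xs) / x) has_real_derivative D2*Xs/x^2) (at x)"
      using that Xs by (auto intro!: derivative_eq_intros simp: field_simps power2_eq_square)
    ultimately have "((\<lambda>x. \<mu>2 (Sin - k3*x) - D2 * (x - Xs) / x) has_real_derivative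
        \<mu>2' (Sin - k3*x) * (-k3) - D2*Xs/x^2) (at x)" by (rule DERIV_diff)
    then show ?thesis unfolding h_def f2_def g2_def by blast
  qed
  have exz: "\<exists>x \<in> {Xs<..<B}. h x = 0"
  proof -
    obtain x where "Xs \<le> x" "x \<le> B" "h x = 0"
      using IVT2'[of h B 0 Xs] hB hXs XsB hcont by force
    then show ?thesis using hB hXs by (cases "x = Xs"; cases "x = B") auto
  qed
  have eqs: "(f2 \<mu>2 Sin k3 x = g2 D2 Xs x) \<longleftrightarrow> h x = 0" for x unfolding h_def by simp
  have P1: "\<exists>!x. x \<in> {Xs<..<B} \<and> h x = 0" if ge: "Xs \<ge> (Sin - S2m) / k3"
  proof -
    have mono: "h y < h x" if "Xs < x" "x < y" "y < B" for x y
    proof -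
      have "Sin - S2m \<le> k3 * Xs" using ge k3 by (simp add: pos_divide_le_eq mult.commute)
      moreover have "k3 * Xs < k3 * x" "k3 * x < k3 * y" "k3 * y < Sin" using that k3 kB by auto
      ultimately have "\<mu>2 (Sin - k3 * y) < \<mu>2 (Sin - k3 * x)" by (intro inc) auto
      moreover have "D2 * Xs / y < D2 * Xs / x" using that Xs D2
        by (intro divide_strict_left_mono) auto
      moreover have "D2 * (x - Xs) / x = D2 - D2 * Xs / x" "D2 * (y - Xs) / y = D2 - D2 * Xs / y"
        using that Xs by (auto simp: field_simps)
      ultimately show ?thesis unfolding h_def f2_def g2_def by simp
    qed
    show ?thesis
    proof (rule ex_ex1I)
      show "\<exists>x. x \<in> {Xs<..<B} \<and> h x = 0" using exz by blast
    next
      fix x y assume "x \<in> {Xs<..<B} \<and> h x = 0" "y \<in> {Xs<..<B} \<and> h y = 0"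
      then show "x = y" using mono[of x y] mono[of y x] by (cases x y rule: linorder_cases) auto
    qed
  qed
  have P2: "finite {x \<in> {Xs<..<B}. h x = 0} \<and> odd (card {x \<in> {Xs<..<B}. h x = 0})"
    if nd: "\<forall>x \<in> {Xs<..<B}. h x = 0 \<longrightarrow> \<not> (h has_real_derivative 0) (at x)"
  proof (rule zeros_odd[OF hcont XsB hXs hB])
    fix z assume z: "Xs < z" "z < B" "h z = 0"
    then obtain d where d: "DERIV h z :> d" using hder by blast
    then have "d \<noteq> 0" using nd z by auto
    then show "sgnchg h z" using deriv_sgnchg[OF d] z by blast
  qed
  show ?thesis
    unfolding eqs B_def[symmetric] h_def[symmetric]
    using P1 P2 exz by blast
qed

end
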